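(* Let $d \ge 2$ and $N=(d-1)^2$. For ${\bm \theta}=(\theta_1,\ldots,\theta_N)\in\mathbb{R}^N$ let $H_d({\bm \theta})$ be the $d\times d$ matrix whose first row and first column consist entirely of $1$'s and whose lower-right $(d-1)\times(d-1)$ submatrix (the core) has entries $[H_d({\bm \theta})]_{i,j}=e^{\mathrm{i}\theta_{(i-2)(d-1)+(j-1)}}$ for $2\le i,j\le d$. Define $\mathcal{V}_d:\mathbb{R}^N\to\mathbb{R}$ by $$\mathcal{V}_d({\bm \theta})=\sum_{i\neq j}\big|[H_d({\bm \theta})H_d({\bm \theta})^*]_{i,j}\big|^2,$$ and consider the gradient system $\dot{{\bm \theta}}=\Phi_d({\bm \theta}):=-\nabla\mathcal{V}_d({\bm \theta})$. Suppose ${\bm \theta}_0$ is such that $H=H_d({\bm \theta}_0)$ is a complex Hadamard matrix, i.e. $HH^*=dI_d$ (so ${\bm \theta}_0$ is a fixed point of $\Phi_d$). Then the dimension of the center subspace of the linearization $D\Phi_d|_{{\bm \theta}_0}$ (the span of generalized eigenvectors for eigenvalues with zero real part; since $D\Phi_d|_{{\bm \theta}_0}$ is symmetric this is its kernel) equals the defect $d(H)$.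
   Context: The defect $d(H)$ of a $d\times d$ complex Hadamard matrix $H$ is the dimension of the real vector space of matrices $R\in M^{d\times d}(\mathbb{R})$ satisfying the real linear system: $[R]_{i,1}=0$ for $1\le i\le d$; $[R]_{1,j}=0$ for $2\le j\le d$; and $\sum_{k=1}^d [H]_{i,k}\overline{[H]_{j,k}}\big([R]_{i,k}-[R]_{j,k}\big)=0$ for all $1\le i<j\le d$ (each such complex equation imposing its real and imaginary parts). $^*$ denotes conjugate transpose. *)

theory Defs
  imports "HOL-Analysis.Analysis" "HOL-Library.Option_ord"
begin

definition adjoint_c :: "complex^'n^'n \<Rightarrow> complex^'n^'n" where
  "adjoint_c H = (\<chi> i j. cnj (H $ j $ i))"

definition complex_hadamard :: "complex^'n^'n::finite \<Rightarrow> bool" where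
  "complex_hadamard H \<longleftrightarrow> H ** adjoint_c H = mat (of_nat CARD('n))"

definition first_idx :: "'n::{finite,linorder}" where
  "first_idx = Min UNIV"

text \<open>Defect of a d x d complex Hadamard matrix: dimension of the real solution space of
  the linear system in the paper (a complex equation = 0 imposes its real and imaginary parts).\<close>
definition defect :: "((complex, 'n::{finite,linorder}) vec, 'n) vec \<Rightarrow> nat" where
  "defect H = dim {R.
      (\<forall>i. R $ i $ first_idx = 0) \<and>
      (\<forall>j. j \<noteq> first_idx \<longrightarrow> R $ first_idx $ j = 0) \<and>
      (\<forall>i j. i < j \<longrightarrow>
         (\<Sum>k\<in>UNIV. H $ i $ k * cnj (H $ j $ k) * complex_of_real (R $ i $ k - R $ j $ k)) = 0)}"

text \<open>Rows/columns are indexed by 'c option: None is the first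
  row/column (entries 1), Some a (a :: 'c) the rows/columns 2..d of the core; so d = CARD('c) + 1.
  The core parameters theta are indexed by the core positions ('c \<times> 'c), N = (d-1)^2.\<close>
definition Hd :: "real^('c::finite \<times> 'c) \<Rightarrow> complex^('c option)^('c option)" where
  "Hd \<theta> = (\<chi> i j. case (i, j) of (Some a, Some b) \<Rightarrow> cis (\<theta> $ (a, b)) | _ \<Rightarrow> 1)"

definition Vd :: "real^('c::finite \<times> 'c) \<Rightarrow> real" where
  "Vd \<theta> = (\<Sum>i\<in>UNIV. \<Sum>j\<in>UNIV - {i}. (cmod ((Hd \<theta> ** adjoint_c (Hd \<theta>)) $ i $ j))\<^sup>2)"

definition grad :: "(real^'m::finite \<Rightarrow> real) \<Rightarrow> real^'m \<Rightarrow> real^'m" where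
  "grad f x = (\<chi> k. frechet_derivative f (at x) (axis k 1))"

definition Phid :: "real^('c::finite \<times> 'c) \<Rightarrow> real^('c \<times> 'c)" where
  "Phid \<theta> = - grad Vd \<theta>"

definition center_subspace :: "real^'m^'m::finite \<Rightarrow> (real^'m) set" where
  "center_subspace M = {v. (\<chi> i. complex_of_real (v $ i)) \<in>
      vec.span {w :: complex^'m. \<exists>c k. Re c = 0 \<and>
        ((\<lambda>u. (\<chi> i j. complex_of_real (M $ i $ j)) *v u - c *s u) ^^ k) w = 0}}"

end

theory Submission
  imports Defs
begin

definition rho :: "'c::finite option \<Rightarrow> 'c option \<Rightarrow> real^('c \<times> 'c) \<Rightarrow> real" where
  "rho i k \<theta> = (case (i, k) of (Some a, Some b) \<Rightarrow> \<theta> $ (a, b) | _ \<Rightarrow> 0)"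

lemma rho_None1[simp]: "rho None k \<theta> = 0" by (simp add: rho_def)
lemma rho_None2[simp]: "rho i None \<theta> = 0" by (cases i) (simp_all add: rho_def)
lemma rho_Some[simp]: "rho (Some a) (Some b) \<theta> = \<theta> $ (a, b)" by (simp add: rho_def)

lemma rho_linear: "linear (rho i k)"
  by (cases i; cases k) (auto simp: linear_iff)

lemma rho_deriv: "(rho i k has_derivative rho i k) F"
  by (rule bounded_linear_imp_has_derivative) (simp add: rho_linear flip: linear_conv_bounded_linear)

lemma Hd_eq: "Hd \<theta> $ i $ k = cis (rho i k \<theta>)"
  by (cases i; cases k) (simp_all add: Hd_def)

definition G :: "'c::finite option \<Rightarrow> 'c option \<Rightarrow> real^('c \<times> 'c) \<Rightarrow> complex" where
  "G i j \<theta> = (\<Sum>k\<in>UNIV. cis (rho i k \<theta> - rho j k \<theta>))"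

lemma G_eq: "(Hd \<theta> ** adjoint_c (Hd \<theta>)) $ i $ j = G i j \<theta>"
  by (simp add: matrix_matrix_mult_def adjoint_c_def Hd_eq G_def cis_cnj cis_mult)

definition DG :: "'c::finite option \<Rightarrow> 'c option \<Rightarrow> real^('c \<times> 'c) \<Rightarrow> real^('c \<times> 'c) \<Rightarrow> complex" where
  "DG i j \<theta> v = (\<Sum>k\<in>UNIV. (rho i k v - rho j k v) *\<^sub>R (\<i> * cis (rho i k \<theta> - rho j k \<theta>)))"

lemma G_deriv: "(G i j has_derivative DG i j \<theta>) (at \<theta>)"
proof -
  have "((\<lambda>x. \<Sum>k\<in>UNIV. cis (rho i k x - rho j k x)) has_derivative
     (\<lambda>v. \<Sum>k\<in>UNIV. (rho i k v - rho j k v) *\<^sub>R (\<i> * cis (rho i k \<theta> - rho j k \<theta>)))) (at \<theta>)"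
    by (intro has_derivative_sum has_derivative_cis has_derivative_diff rho_deriv)
  then show ?thesis by (simp add: G_def[abs_def] DG_def[abs_def])
qed

lemma DG_linear: "linear (DG i j \<theta>)"
  using G_deriv has_derivative_linear by blast


definition DV :: "real^('c::finite \<times> 'c) \<Rightarrow> real^('c \<times> 'c) \<Rightarrow> real" where
  "DV \<theta> h = (\<Sum>i\<in>UNIV. \<Sum>j\<in>UNIV - {i}. 2 * inner (G i j \<theta>) (DG i j \<theta> h))"

lemma Vd_eq: "Vd = (\<lambda>\<theta>. \<Sum>i\<in>UNIV. \<Sum>j\<in>UNIV - {i}. inner (G i j \<theta>) (G i j \<theta>))"
  by (simp add: Vd_def[abs_def] G_eq power2_norm_eq_inner)

lemma Vd_deriv: "(Vd has_derivative DV \<theta>) (at \<theta>)"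
proof -
  have "((\<lambda>\<theta>. \<Sum>i\<in>UNIV. \<Sum>j\<in>UNIV - {i}. inner (G i j \<theta>) (G i j \<theta>)) has_derivative
     (\<lambda>h. \<Sum>i\<in>UNIV. \<Sum>j\<in>UNIV - {i}. inner (G i j \<theta>) (DG i j \<theta> h) + inner (DG i j \<theta> h) (G i j \<theta>))) (at \<theta>)"
    by (intro has_derivative_sum has_derivative_inner G_deriv)
  then show ?thesis unfolding Vd_eq DV_def[abs_def]
    by (simp add: inner_commute[of "DG _ _ _ _"])
qed

lemma grad_Vd: "grad Vd \<theta> = (\<chi> p. DV \<theta> (axis p 1))"
  unfolding grad_def using frechet_derivative_at[OF Vd_deriv] by metis


lemma DG_deriv: "((\<lambda>x. DG i j x e) has_derivative
   (\<lambda>h. \<Sum>k\<in>UNIV. (rho i k e - rho j k e) *\<^sub>R (\<i> * ((rho i k h - rho j k h) *\<^sub>R (\<i> * cis (rho i k x - rho j k x)))))) (at x)"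
  unfolding DG_def
  by (intro has_derivative_sum has_derivative_scaleR_right has_derivative_mult_right has_derivative_cis has_derivative_diff rho_deriv)

lemma inner_zero_deriv:
  assumes "(f has_derivative f') (at x)" "(g has_derivative g') (at x)" "f x = 0"
  shows "((\<lambda>y. inner (f y) (g y)) has_derivative (\<lambda>h. inner (f' h) (g x))) (at x)"
  using has_derivative_inner[OF assms(1,2)] assms(3) by simp

lemma vec_lambda_sum_axis: "(\<chi> p. f p) = (\<Sum>p\<in>UNIV. (f p :: real) *\<^sub>R axis p 1)"
  by (simp add: vec_eq_iff axis_def if_distrib sum.delta cong: if_cong)

lemma Phid_eq: "Phid = (\<lambda>\<theta>. - (\<Sum>p\<in>UNIV. DV \<theta> (axis p 1) *\<^sub>R axis p 1))"
  by (simp add: Phid_def[abs_def] grad_Vd vec_lambda_sum_axis)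

definition LL :: "real^('c::finite \<times> 'c) \<Rightarrow> real^('c \<times> 'c) \<Rightarrow> real^('c \<times> 'c)" where
  "LL \<theta>0 h = - (\<Sum>p\<in>UNIV. (\<Sum>i\<in>UNIV. \<Sum>j\<in>UNIV - {i}. 2 * inner (DG i j \<theta>0 h) (DG i j \<theta>0 (axis p 1))) *\<^sub>R axis p 1)"

lemma Phid_deriv:
  assumes "\<And>i j. i \<noteq> j \<Longrightarrow> G i j \<theta>0 = 0"
  shows "(Phid has_derivative LL \<theta>0) (at \<theta>0)"
  unfolding Phid_eq LL_def[abs_def] DV_def
  apply (intro has_derivative_minus has_derivative_sum has_derivative_scaleR_left has_derivative_mult_right)
  apply (rule inner_zero_deriv[OF G_deriv DG_deriv])
  using assms by auto


lemma center_sym: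
  fixes M :: "real^'m^'m::finite"
  assumes sym: "\<And>p q. M$p$q = M$q$p"
  shows "center_subspace M = {v. M *v v = 0}"
proof -
  define Mc :: "complex^'m^'m" where "Mc = (\<chi> i j. complex_of_real (M $ i $ j))"
  define ip :: "complex^'m \<Rightarrow> complex^'m \<Rightarrow> complex" where "ip y z = (\<Sum>p\<in>UNIV. cnj (y$p) * z$p)" for y z
  have herm: "ip y (Mc *v z) = ip (Mc *v y) z" for y z
  proof -
    have "ip y (Mc *v z) = (\<Sum>p\<in>UNIV. \<Sum>q\<in>UNIV. cnj (y$p) * complex_of_real (M$p$q) * z$q)"
      by (simp add: ip_def Mc_def matrix_vector_mult_def sum_distrib_left mult_ac)
    also have "\<dots> = (\<Sum>q\<in>UNIV. \<Sum>p\<in>UNIV. cnj (y$p) * complex_of_real (M$p$q) * z$q)"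
      by (rule sum.swap)
    also have "\<dots> = ip (Mc *v y) z"
      by (simp add: ip_def Mc_def matrix_vector_mult_def sum_distrib_right sum_distrib_left mult_ac sym)
    finally show ?thesis .
  qed
  have cnj_ip: "cnj (ip y z) = ip z y" for y z
    by (simp add: ip_def mult.commute)
  have ip_scale: "ip y (c *s z) = c * ip y z" for y z c
    by (simp add: ip_def sum_distrib_left mult_ac)
  have ip_self: "ip y y = complex_of_real (\<Sum>p\<in>UNIV. (cmod (y$p))\<^sup>2)" for y
    unfolding ip_def of_real_sum complex_norm_square by (simp add: mult.commute)
  have ip_self0: "y = 0" if "Re (ip y y) = 0" for y
  proof -
    have "(\<Sum>p\<in>UNIV. (cmod (y$p))\<^sup>2) = 0" using that ip_self[of y] by simp
    then have "\<forall>p\<in>UNIV. (cmod (y$p))\<^sup>2 = 0" by (subst (asm) sum_nonneg_eq_0_iff) auto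
    then show ?thesis by (simp add: vec_eq_iff)
  qed
  have key: "((\<lambda>u. Mc *v u - c *s u) ^^ k) w = 0 \<Longrightarrow> Re c = 0 \<Longrightarrow> Mc *v w = 0" for k w c
  proof (induction k arbitrary: w)
    case 0
    then show ?case by simp
  next
    case (Suc k)
    have "((\<lambda>u. Mc *v u - c *s u) ^^ k) (Mc *v w - c *s w) = 0"
      using Suc.prems(1) by (simp add: funpow_Suc_right del: funpow.simps)
    then have "Mc *v (Mc *v w - c *s w) = 0" using Suc.IH Suc.prems(2) by blast
    then have eq: "Mc *v (Mc *v w) = c *s (Mc *v w)" by (simp add: vec.diff vec.scale)
    define y where "y = Mc *v w"
    have "ip y y = ip w (Mc *v y)" by (simp add: herm y_def)
    also have "\<dots> = c * ip w y" using eq by (simp add: y_def ip_scale)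
    finally have 1: "ip y y = c * ip w y" .
    have "cnj (ip w y) = ip w y" unfolding y_def cnj_ip herm ..
    then have "Im (ip w y) = 0" by (metis complex_cnj_cancel_iff cnj.sel(2) neg_equal_zero)
    then have "Re (ip y y) = 0" using 1 Suc.prems(2) by simp
    then have "y = 0" by (rule ip_self0)
    then show ?case by (simp add: y_def)
  qed
  define S where "S = {w :: complex^'m. \<exists>c k. Re c = 0 \<and>
        ((\<lambda>u. (\<chi> i j. complex_of_real (M $ i $ j)) *v u - c *s u) ^^ k) w = 0}"
  have sub: "vec.subspace {w. Mc *v w = 0}"
    by (simp add: vec.subspace_def vec.add vec.scale)
  have "vec.span S \<subseteq> {w. Mc *v w = 0}"
    by (rule vec.span_minimal[OF _ sub]) (auto simp: S_def Mc_def[symmetric] intro: key)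
  moreover have "{w. Mc *v w = 0} \<subseteq> vec.span S"
  proof
    fix w assume "w \<in> {w. Mc *v w = 0}"
    then have "w \<in> S" unfolding S_def Mc_def[symmetric]
      by (intro CollectI exI[of _ 0] exI[of _ 1]) simp
    then show "w \<in> vec.span S" by (rule vec.span_base)
  qed
  ultimately have span: "vec.span S = {w. Mc *v w = 0}" by blast
  have cv: "Mc *v (\<chi> i. complex_of_real (v $ i)) = (\<chi> i. complex_of_real ((M *v v) $ i))" for v
    by (simp add: vec_eq_iff Mc_def matrix_vector_mult_def)
  show ?thesis
    unfolding center_subspace_def S_def[symmetric] span
    by (auto simp: cv vec_eq_iff)
qed


lemma LL_comp: "LL \<theta>0 h $ p = - (\<Sum>i\<in>UNIV. \<Sum>j\<in>UNIV - {i}. 2 * inner (DG i j \<theta>0 h) (DG i j \<theta>0 (axis p 1)))"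
  unfolding LL_def vec_lambda_sum_axis[symmetric] by simp

lemma lin_exp:
  fixes f :: "real^'n::finite \<Rightarrow> 'b::real_vector"
  assumes "linear f"
  shows "f v = (\<Sum>p\<in>UNIV. v$p *\<^sub>R f (axis p 1))"
proof -
  have "f v = f (\<Sum>p\<in>UNIV. v$p *\<^sub>R axis p 1)" using basis_expansion[of v] by (simp add: scalar_mult_eq_scaleR)
  also have "\<dots> = (\<Sum>p\<in>UNIV. v$p *\<^sub>R f (axis p 1))"
    using assms by (simp add: linear_sum linear_scale o_def)
  finally show ?thesis .
qed

lemma LL_quad: "inner v (LL \<theta>0 v) = - (\<Sum>i\<in>UNIV. \<Sum>j\<in>UNIV - {i}. 2 * inner (DG i j \<theta>0 v) (DG i j \<theta>0 v))"
proof -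
  have "inner v (LL \<theta>0 v) = (\<Sum>p\<in>UNIV. v$p * LL \<theta>0 v $ p)" by (simp add: inner_vec_def)
  also have "\<dots> = - (\<Sum>p\<in>UNIV. \<Sum>i\<in>UNIV. \<Sum>j\<in>UNIV - {i}. 2 * inner (DG i j \<theta>0 v) (v$p *\<^sub>R DG i j \<theta>0 (axis p 1)))"
    by (simp add: LL_comp sum_distrib_left sum_negf mult_ac)
  also have "\<dots> = - (\<Sum>i\<in>UNIV. \<Sum>j\<in>UNIV - {i}. \<Sum>p\<in>UNIV. 2 * inner (DG i j \<theta>0 v) (v$p *\<^sub>R DG i j \<theta>0 (axis p 1)))"
  proof -
    have "(\<Sum>p\<in>UNIV. \<Sum>i\<in>UNIV. \<Sum>j\<in>UNIV - {i}. 2 * inner (DG i j \<theta>0 v) (v$p *\<^sub>R DG i j \<theta>0 (axis p 1)))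
      = (\<Sum>i\<in>UNIV. \<Sum>p\<in>UNIV. \<Sum>j\<in>UNIV - {i}. 2 * inner (DG i j \<theta>0 v) (v$p *\<^sub>R DG i j \<theta>0 (axis p 1)))"
      by (rule sum.swap)
    also have "\<dots> = (\<Sum>i\<in>UNIV. \<Sum>j\<in>UNIV - {i}. \<Sum>p\<in>UNIV. 2 * inner (DG i j \<theta>0 v) (v$p *\<^sub>R DG i j \<theta>0 (axis p 1)))"
      by (intro sum.cong refl sum.swap)
    finally show ?thesis by simp
  qed
  also have "\<dots> = - (\<Sum>i\<in>UNIV. \<Sum>j\<in>UNIV - {i}. 2 * inner (DG i j \<theta>0 v) (DG i j \<theta>0 v))"
    by (simp add: lin_exp[OF DG_linear, of _ _ _ v] inner_sum_right sum_distrib_left)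
  finally show ?thesis .
qed

lemma LL_kernel:
  assumes "\<And>i j. i \<noteq> j \<Longrightarrow> G i j \<theta>0 = 0"
  shows "{v. LL \<theta>0 v = 0} = {v. \<forall>i j. i \<noteq> j \<longrightarrow> DG i j \<theta>0 v = 0}"
proof (intro set_eqI iffI; simp)
  fix v assume "\<forall>i j. i \<noteq> j \<longrightarrow> DG i j \<theta>0 v = 0"
  then show "LL \<theta>0 v = 0" by (simp add: vec_eq_iff LL_comp)
next
  fix v :: "real^('a \<times> 'a)" assume "LL \<theta>0 v = 0"
  then have "(\<Sum>i\<in>UNIV. \<Sum>j\<in>UNIV - {i}. 2 * inner (DG i j \<theta>0 v) (DG i j \<theta>0 v)) = 0"
    using LL_quad[of v \<theta>0] by simp
  then have "\<forall>i\<in>UNIV. (\<Sum>j\<in>UNIV - {i}. 2 * inner (DG i j \<theta>0 v) (DG i j \<theta>0 v)) = 0"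
    by (subst (asm) sum_nonneg_eq_0_iff) (auto intro: sum_nonneg)
  then have "\<forall>i. \<forall>j\<in>UNIV - {i}. 2 * inner (DG i j \<theta>0 v) (DG i j \<theta>0 v) = 0"
    by (subst (asm) sum_nonneg_eq_0_iff) auto
  then show "\<forall>i j. i \<noteq> j \<longrightarrow> DG i j \<theta>0 v = 0" by auto
qed


definition Rmap :: "real^('c::finite \<times> 'c) \<Rightarrow> real^('c option)^('c option)" where
  "Rmap v = (\<chi> i k. rho i k v)"

lemma Rmap_linear: "linear Rmap"
  by (auto simp: linear_iff vec_eq_iff Rmap_def rho_def split: option.split)

lemma Rmap_inj: "inj Rmap"
proof (rule injI)
  fix v w assume "Rmap v = Rmap w"
  then have "Rmap v $ Some a $ Some b = Rmap w $ Some a $ Some b" for a b by simp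
  then show "v = w" by (auto simp: vec_eq_iff Rmap_def)
qed

lemma first_idx_None: "(first_idx :: 'c::{finite,linorder} option) = None"
  unfolding first_idx_def by (rule Min_eqI) auto

definition SS :: "real^('c::finite \<times> 'c) \<Rightarrow> 'c option \<Rightarrow> 'c option \<Rightarrow> real^('c \<times> 'c) \<Rightarrow> complex" where
  "SS \<theta>0 i j v = (\<Sum>k\<in>UNIV. Hd \<theta>0 $ i $ k * cnj (Hd \<theta>0 $ j $ k) * complex_of_real (rho i k v - rho j k v))"

lemma DG_SS: "DG i j \<theta>0 v = \<i> * SS \<theta>0 i j v"
  by (simp add: DG_def SS_def Hd_eq cis_cnj cis_mult sum_distrib_left scaleR_conv_of_real mult_ac)

lemma SS_swap: "SS \<theta>0 j i v = - cnj (SS \<theta>0 i j v)"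
  by (simp add: SS_def Hd_eq cis_cnj cis_mult sum_negf[symmetric] algebra_simps)

lemma defect_set:
  "{R. (\<forall>i. R $ i $ first_idx = 0) \<and>
      (\<forall>j. j \<noteq> first_idx \<longrightarrow> R $ first_idx $ j = 0) \<and>
      (\<forall>i j. i < j \<longrightarrow>
         (\<Sum>k\<in>UNIV. Hd \<theta>0 $ i $ k * cnj (Hd \<theta>0 $ j $ k) * complex_of_real (R $ i $ k - R $ j $ k)) = 0)}
   = Rmap ` {v. \<forall>i j. i \<noteq> j \<longrightarrow> DG i j \<theta>0 v = (0::complex)}"
  (is "?D = _")
proof -
  have cond: "(\<forall>i j. i \<noteq> j \<longrightarrow> DG i j \<theta>0 v = 0) \<longleftrightarrow> (\<forall>i j. i < j \<longrightarrow> SS \<theta>0 i j v = 0)" for v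
  proof
    assume "\<forall>i j. i \<noteq> j \<longrightarrow> DG i j \<theta>0 v = 0" then show "\<forall>i j. i < j \<longrightarrow> SS \<theta>0 i j v = 0"
      by (auto simp: DG_SS)
  next
    assume a: "\<forall>i j. i < j \<longrightarrow> SS \<theta>0 i j v = 0"
    show "\<forall>i j. i \<noteq> j \<longrightarrow> DG i j \<theta>0 v = 0"
    proof (intro allI impI)
      fix i j :: "'a option" assume "i \<noteq> j"
      then consider "i < j" | "j < i" by fastforce
      then show "DG i j \<theta>0 v = 0"
      proof cases
        case 1 then show ?thesis using a by (simp add: DG_SS)
      next
        case 2 then show ?thesis using a SS_swap[of \<theta>0 i j v] by (simp add: DG_SS)
      qed
    qed
  qed
  have RS: "SS \<theta>0 i j v = (\<Sum>k\<in>UNIV. Hd \<theta>0 $ i $ k * cnj (Hd \<theta>0 $ j $ k) * complex_of_real (Rmap v $ i $ k - Rmap v $ j $ k))" for i j v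
    by (simp add: SS_def Rmap_def)
  show ?thesis
  proof (intro set_eqI iffI)
    fix R assume R: "R \<in> ?D"
    define v where "v = (\<chi> ab. R $ Some (fst ab) $ Some (snd ab))"
    have "Rmap v = R"
    proof -
      have "Rmap v $ i $ k = R $ i $ k" for i k
        using R by (cases i; cases k) (auto simp: Rmap_def v_def first_idx_None)
      then show ?thesis by (simp add: vec_eq_iff)
    qed
    moreover have "\<forall>i j. i \<noteq> j \<longrightarrow> DG i j \<theta>0 v = 0"
      unfolding cond RS using R \<open>Rmap v = R\<close> by simp
    ultimately show "R \<in> Rmap ` {v. \<forall>i j. i \<noteq> j \<longrightarrow> DG i j \<theta>0 v = 0}" by blast
  next
    fix R assume "R \<in> Rmap ` {v. \<forall>i j. i \<noteq> j \<longrightarrow> DG i j \<theta>0 v = 0}"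
    then obtain v where v: "R = Rmap v" "\<forall>i j. i \<noteq> j \<longrightarrow> DG i j \<theta>0 v = 0" by blast
    then have "\<forall>i j. i < j \<longrightarrow> SS \<theta>0 i j v = 0" using cond by blast
    then show "R \<in> ?D" using v(1) by (simp add: RS first_idx_None Rmap_def)
  qed
qed

theorem mainTheorem1:
  fixes \<theta>0 :: "(real, 'c::{finite,linorder} \<times> 'c) vec"
  assumes "complex_hadamard (Hd \<theta>0)"
  shows "dim (center_subspace (matrix (frechet_derivative Phid (at \<theta>0)))) = defect (Hd \<theta>0)"
proof -
  have hG: "G i j \<theta>0 = 0" if "i \<noteq> j" for i j
  proof -
    have "(Hd \<theta>0 ** adjoint_c (Hd \<theta>0)) $ i $ j = mat (of_nat CARD('c option)) $ i $ j"
      using assms unfolding complex_hadamard_def by simp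
    then show ?thesis using that by (simp add: G_eq mat_def)
  qed
  have fd: "frechet_derivative Phid (at \<theta>0) = LL \<theta>0"
    using frechet_derivative_at[OF Phid_deriv[OF hG]] by simp
  have lin: "linear (LL \<theta>0)" using Phid_deriv[OF hG] has_derivative_linear by blast
  have sym: "matrix (LL \<theta>0) $ p $ q = matrix (LL \<theta>0) $ q $ p" for p q
    by (simp add: matrix_def LL_comp inner_commute)
  have "center_subspace (matrix (LL \<theta>0)) = {v. LL \<theta>0 v = 0}"
    using center_sym[OF sym] by (simp add: matrix_works[OF lin[folded linear_matrix_vector_mul_eq]])
  also have "\<dots> = {v. \<forall>i j. i \<noteq> j \<longrightarrow> DG i j \<theta>0 v = 0}" by (rule LL_kernel[OF hG])
  finally have c: "center_subspace (matrix (LL \<theta>0)) = {v. \<forall>i j. i \<noteq> j \<longrightarrow> DG i j \<theta>0 v = 0}" .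
  show ?thesis
    unfolding fd c defect_def defect_set
    by (rule dim_image_eq[symmetric, OF Rmap_linear]) (meson Rmap_inj inj_on_subset subset_UNIV)
qed

end
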